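(* Let $T$ be a tower gadget of height $h\in\mathbb{N}$ and let $M_1,M_2$ be two perfect matchings of $T$ that are both in semi-default state. Then there exists a well-behaved flip sequence $(P_1,\dots,P_{2h})$ for $T$ starting from $M_1$, of length exactly $2h$, with $M_1\triangle P_1\triangle\cdots\triangle P_{2h}=M_2$.
   Context: A tower gadget of height $h$ is the graph on vertices $\{v,w\}\cup\{a_i,b_i: 0\le i\le h\}$ with edge set $\{va_0,b_0w\}\cup\{a_ib_i:0\le i\le h\}\cup\{a_ia_{i-1},b_ib_{i-1}:1\le i\le h\}$. A perfect matching $M$ of $T$ is in semi-default state if $va_0,b_0w\in M$. A path is alternating w.r.t. an edge set $S$ if its consecutive edges alternate between belonging and not belonging to $S$ (it may start or end with either kind). A well-behaved flip sequence for $T$ starting from $M$ is a sequence $(P_1,\dots,P_d)$ where each $P_i$ is a path from $v$ to $w$ inside $T$ that is alternating with respect to $M\triangle P_1\triangle\cdots\triangle P_{i-1}$ ($\triangle$ = symmetric difference). *)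

theory Defs
  imports Main
begin

datatype tvert = Vv | Ww | Av nat | Bv nat

definition tower_verts :: "nat \<Rightarrow> tvert set" where
  "tower_verts h = {Vv, Ww} \<union> Av ` {0..h} \<union> Bv ` {0..h}"

definition tower_edges :: "nat \<Rightarrow> tvert set set" where
  "tower_edges h = {{Vv, Av 0}, {Bv 0, Ww}}
     \<union> {{Av i, Bv i} | i. i \<le> h}
     \<union> {{Av i, Av (i - 1)} | i. 1 \<le> i \<and> i \<le> h}
     \<union> {{Bv i, Bv (i - 1)} | i. 1 \<le> i \<and> i \<le> h}"

definition perfect_matching :: "'a set set \<Rightarrow> 'a set \<Rightarrow> 'a set set \<Rightarrow> bool" where
  "perfect_matching E V M \<longleftrightarrow> M \<subseteq> E \<and> (\<forall>x\<in>V. \<exists>!e. e \<in> M \<and> x \<in> e)"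

definition semi_default :: "tvert set set \<Rightarrow> bool" where
  "semi_default M \<longleftrightarrow> {Vv, Av 0} \<in> M \<and> {Bv 0, Ww} \<in> M"

definition symdiff :: "'a set \<Rightarrow> 'a set \<Rightarrow> 'a set" where
  "symdiff A B = (A - B) \<union> (B - A)"

definition is_path :: "'a set set \<Rightarrow> 'a list \<Rightarrow> 'a \<Rightarrow> 'a \<Rightarrow> bool" where
  "is_path E xs u v \<longleftrightarrow> xs \<noteq> [] \<and> hd xs = u \<and> last xs = v \<and> distinct xs \<and>
     (\<forall>i. Suc i < length xs \<longrightarrow> {xs ! i, xs ! Suc i} \<in> E)"

definition path_edges :: "'a list \<Rightarrow> 'a set set" where
  "path_edges xs = {{xs ! i, xs ! Suc i} | i. Suc i < length xs}"

definition alternating :: "'a set set \<Rightarrow> 'a list \<Rightarrow> bool" where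
  "alternating S xs \<longleftrightarrow> (\<forall>i. Suc (Suc i) < length xs \<longrightarrow>
     ({xs ! i, xs ! Suc i} \<in> S \<longleftrightarrow> {xs ! Suc i, xs ! Suc (Suc i)} \<notin> S))"

fun flip_all :: "'a set set \<Rightarrow> 'a list list \<Rightarrow> 'a set set" where
  "flip_all M [] = M"
| "flip_all M (P # Ps) = flip_all (symdiff M (path_edges P)) Ps"

definition well_behaved :: "nat \<Rightarrow> tvert set set \<Rightarrow> tvert list list \<Rightarrow> bool" where
  "well_behaved h M Ps \<longleftrightarrow> (\<forall>i < length Ps.
      is_path (tower_edges h) (Ps ! i) Vv Ww \<and>
      alternating (flip_all M (take i Ps)) (Ps ! i))"

end

theory Submission
  imports Defs
begin


definition pv :: "nat \<Rightarrow> nat \<Rightarrow> tvert" where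
  "pv j i = (if i = 0 then Vv else if i \<le> Suc j then Av (i - 1)
             else if i \<le> 2*j+2 then Bv (2*j+2-i) else Ww)"

definition pth :: "nat \<Rightarrow> tvert list" where
  "pth j = map (pv j) [0..<2*j+4]"

lemma te_va: "{Vv, Av 0} \<in> tower_edges h" unfolding tower_edges_def by auto
lemma te_bw: "{Bv 0, Ww} \<in> tower_edges h" unfolding tower_edges_def by auto
lemma te_rung: "i \<le> h \<Longrightarrow> {Av i, Bv i} \<in> tower_edges h" unfolding tower_edges_def by auto
lemma te_ra: "Suc i \<le> h \<Longrightarrow> {Av i, Av (Suc i)} \<in> tower_edges h"
proof -
  assume "Suc i \<le> h"
  hence "{Av i, Av (Suc i)} \<in> {{Av k, Av (k - 1)} | k. 1 \<le> k \<and> k \<le> h}"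
    by (auto intro!: exI[of _ "Suc i"])
  thus ?thesis unfolding tower_edges_def by blast
qed
lemma te_rb: "Suc i \<le> h \<Longrightarrow> {Bv i, Bv (Suc i)} \<in> tower_edges h"
proof -
  assume "Suc i \<le> h"
  hence "{Bv i, Bv (Suc i)} \<in> {{Bv k, Bv (k - 1)} | k. 1 \<le> k \<and> k \<le> h}"
    by (auto intro!: exI[of _ "Suc i"])
  thus ?thesis unfolding tower_edges_def by blast
qed

lemma pv_inj: "inj_on (pv j) {0..<2*j+4}"
  unfolding inj_on_def pv_def by auto

lemma pth_path: "j \<le> h \<Longrightarrow> is_path (tower_edges h) (pth j) Vv Ww"
proof -
  assume jh: "j \<le> h"
  have e: "{pv j i, pv j (Suc i)} \<in> tower_edges h" if "i < 2*j+3" for i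
  proof -
    consider "i = 0" | "1 \<le> i \<and> i \<le> j" | "i = Suc j" | "j+2 \<le> i \<and> i \<le> 2*j+1" | "i = 2*j+2"
      using \<open>i < 2*j+3\<close> by linarith
    thus ?thesis
    proof cases
      case 1 thus ?thesis by (simp add: pv_def te_va)
    next
      case 2
      hence "pv j i = Av (i-1)" "pv j (Suc i) = Av (Suc (i-1))" by (auto simp: pv_def)
      thus ?thesis using te_ra[of "i-1" h] 2 jh by simp
    next
      case 3 thus ?thesis using te_rung[of j h] jh by (simp add: pv_def)
    next
      case 4
      hence "pv j i = Bv (Suc (2*j+1-i))" "pv j (Suc i) = Bv (2*j+1-i)" by (auto simp: pv_def)
      moreover have "Suc (2*j+1-i) \<le> h" using 4 jh by linarith
      ultimately show ?thesis using te_rb[of "2*j+1-i" h] by (simp add: insert_commute)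
    next
      case 5 thus ?thesis by (simp add: pv_def te_bw)
    qed
  qed
  show ?thesis unfolding is_path_def pth_def
    using e by (auto simp: distinct_map pv_inj last_map hd_map) (auto simp: pv_def)
qed

definition RA :: "nat \<Rightarrow> tvert set set" where
  "RA j = {{Av i, Av (Suc i)} | i. i < j}"
definition RB :: "nat \<Rightarrow> tvert set set" where
  "RB j = {{Bv i, Bv (Suc i)} | i. i < j}"
definition PE :: "nat \<Rightarrow> tvert set set" where
  "PE j = {{Vv, Av 0}, {Bv 0, Ww}, {Av j, Bv j}} \<union> RA j \<union> RB j"

lemma pth_edges: "path_edges (pth j) = PE j"
proof (rule set_eqI, rule iffI)
  fix e assume "e \<in> path_edges (pth j)"
  then obtain i where i: "i < 2*j+3" "e = {pv j i, pv j (Suc i)}"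
  proof -
    from \<open>e \<in> path_edges (pth j)\<close> obtain i where "Suc i < length (pth j)"
       "e = {pth j ! i, pth j ! Suc i}" unfolding path_edges_def by blast
    hence "i < 2*j+3" "e = {pv j i, pv j (Suc i)}" unfolding pth_def by (simp_all del: upt_Suc)
    thus ?thesis using that by blast
  qed
  consider "i = 0" | "1 \<le> i \<and> i \<le> j" | "i = Suc j" | "j+2 \<le> i \<and> i \<le> 2*j+1" | "i = 2*j+2"
    using i by linarith
  thus "e \<in> PE j"
  proof cases
    case 2
    hence "pv j i = Av (i-1)" "pv j (Suc i) = Av (Suc (i-1))" by (auto simp: pv_def)
    hence "e = {Av (i-1), Av (Suc (i-1))}" using i by auto
    moreover have "i-1 < j" using 2 by linarith
    ultimately have "e \<in> RA j" unfolding RA_def by blast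
    thus ?thesis unfolding PE_def by blast
  next
    case 4
    hence "pv j i = Bv (Suc (2*j+1-i))" "pv j (Suc i) = Bv (2*j+1-i)" by (auto simp: pv_def)
    hence "e = {Bv (2*j+1-i), Bv (Suc (2*j+1-i))}" using i by auto
    moreover have "2*j+1-i < j" using 4 by linarith
    ultimately have "e \<in> RB j" unfolding RB_def by blast
    thus ?thesis unfolding PE_def by blast
  next
    case 1 thus ?thesis using i by (simp add: pv_def PE_def)
  next
    case 3 thus ?thesis using i by (simp add: pv_def PE_def)
  next
    case 5 thus ?thesis using i by (simp add: pv_def PE_def)
  qed
next
  fix e assume "e \<in> PE j"
  have pe: "{pv j i, pv j (Suc i)} \<in> path_edges (pth j)" if "i < 2*j+3" for i
  proof -
    have "Suc i < length (pth j)" "pth j ! i = pv j i" "pth j ! Suc i = pv j (Suc i)"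
      using that unfolding pth_def by (simp_all del: upt_Suc)
    thus ?thesis unfolding path_edges_def by (metis (mono_tags, lifting) mem_Collect_eq)
  qed
  from \<open>e \<in> PE j\<close> consider "e = {Vv, Av 0}" | "e = {Bv 0, Ww}" | "e = {Av j, Bv j}"
    | "\<exists>i<j. e = {Av i, Av (Suc i)}" | "\<exists>i<j. e = {Bv i, Bv (Suc i)}"
    unfolding PE_def RA_def RB_def by blast
  thus "e \<in> path_edges (pth j)"
  proof cases
    case 1 thus ?thesis using pe[of 0] by (simp add: pv_def)
  next
    case 2 thus ?thesis using pe[of "2*j+2"] by (simp add: pv_def)
  next
    case 3 thus ?thesis using pe[of "Suc j"] by (simp add: pv_def)
  next
    case 4 then obtain i where "i<j" "e = {Av i, Av (Suc i)}" by blast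
    thus ?thesis using pe[of "Suc i"] by (simp add: pv_def)
  next
    case 5 then obtain i where "i<j" "e = {Bv i, Bv (Suc i)}" by blast
    moreover have "pv j (2*j+1-i) = Bv (Suc i)" "pv j (Suc (2*j+1-i)) = Bv i"
      using \<open>i<j\<close> by (auto simp: pv_def)
    ultimately show ?thesis using pe[of "2*j+1-i"] by (simp add: insert_commute)
  qed
qed



datatype tile = R | H

fun wlen :: "tile list \<Rightarrow> nat" where
  "wlen [] = 0" | "wlen (R # w) = Suc (wlen w)" | "wlen (H # w) = Suc (Suc (wlen w))"

fun dset :: "nat \<Rightarrow> tile list \<Rightarrow> tvert set set" where
  "dset k [] = {}"
| "dset k (R # w) = insert {Av k, Bv k} (dset (Suc k) w)"
| "dset k (H # w) = {{Av k, Av (Suc k)}, {Bv k, Bv (Suc k)}} \<union> dset (Suc (Suc k)) w"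

definition hi :: "nat \<Rightarrow> tvert set \<Rightarrow> bool" where
  "hi k e \<longleftrightarrow> (\<forall>z\<in>e. \<exists>i\<ge>k. z = Av i \<or> z = Bv i)"

lemma dset_hi: "e \<in> dset k w \<Longrightarrow> hi k e"
proof (induction w arbitrary: k)
  case Nil thus ?case by simp
next
  case (Cons t w)
  show ?case
  proof (cases t)
    case R
    with Cons show ?thesis by (auto simp: hi_def) (metis Suc_leD)+
  next
    case H
    with Cons show ?thesis apply (auto simp: hi_def)
      by (metis Suc_leD)+
  qed
qed

definition matching :: "'a set set \<Rightarrow> bool" where
  "matching S \<longleftrightarrow> (\<forall>z e1 e2. e1 \<in> S \<longrightarrow> e2 \<in> S \<longrightarrow> z \<in> e1 \<longrightarrow> z \<in> e2 \<longrightarrow> e1 = e2)"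

lemma dset_matching: "matching (dset k w)"
proof (induction w arbitrary: k)
  case Nil thus ?case by (simp add: matching_def)
next
  case (Cons t w)
  show ?case
  proof (cases t)
    case R
    have "\<not> hi (Suc k) e" if "Av k \<in> e \<or> Bv k \<in> e" for e
      using that unfolding hi_def by fastforce
    with Cons.IH[of "Suc k"] dset_hi[of _ "Suc k" w] R show ?thesis
      unfolding matching_def by simp metis
  next
    case H
    have "\<not> hi (Suc (Suc k)) e" if "Av k \<in> e \<or> Bv k \<in> e \<or> Av (Suc k) \<in> e \<or> Bv (Suc k) \<in> e" for e
      using that unfolding hi_def by fastforce
    with Cons.IH[of "Suc (Suc k)"] dset_hi[of _ "Suc (Suc k)" w] H show ?thesis
      unfolding matching_def by simp metis
  qed
qed

definition Dst :: "tile list \<Rightarrow> tvert set set" where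
  "Dst x = {{Vv, Av 0}, {Bv 0, Ww}} \<union> dset 1 x"

lemma Dst_matching: "matching (Dst x)"
proof -
  have "\<not> hi 1 e" if "Vv \<in> e \<or> Ww \<in> e \<or> Av 0 \<in> e \<or> Bv 0 \<in> e" for e
    using that unfolding hi_def by fastforce
  with dset_matching[of 1 x] dset_hi[of _ 1 x] show ?thesis
    unfolding matching_def Dst_def by simp metis
qed

lemma symdiff_invol: "symdiff (symdiff A B) B = A"
  unfolding symdiff_def by blast

lemma alt_from_matchings:
  assumes "matching S" "matching (symdiff S (path_edges xs))" "distinct xs"
  shows "alternating S xs"
  unfolding alternating_def
proof (intro allI impI)
  fix i assume i: "Suc (Suc i) < length xs"
  let ?e1 = "{xs ! i, xs ! Suc i}" and ?e2 = "{xs ! Suc i, xs ! Suc (Suc i)}"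
  have ne: "?e1 \<noteq> ?e2"
  proof
    assume "?e1 = ?e2"
    hence "xs ! i = xs ! Suc (Suc i) \<or> xs ! i = xs ! Suc i" by (auto simp: doubleton_eq_iff)
    thus False using assms(3) i by (simp add: nth_eq_iff_index_eq)
  qed
  have p: "?e1 \<in> path_edges xs" "?e2 \<in> path_edges xs"
    unfolding path_edges_def using i by force+
  show "(?e1 \<in> S) = (?e2 \<notin> S)"
  proof
    assume "?e1 \<in> S" thus "?e2 \<notin> S" using assms(1) ne unfolding matching_def by blast
  next
    assume "?e2 \<notin> S"
    show "?e1 \<in> S"
    proof (rule ccontr)
      assume "?e1 \<notin> S"
      hence "?e1 \<in> symdiff S (path_edges xs)" "?e2 \<in> symdiff S (path_edges xs)"
        using p \<open>?e2 \<notin> S\<close> unfolding symdiff_def by auto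
      thus False using assms(2) ne unfolding matching_def by blast
    qed
  qed
qed

definition HA :: "nat \<Rightarrow> nat \<Rightarrow> tvert set set" where
  "HA k m = {{Av (k+2*i), Av (Suc (k+2*i))} | i. i < m}"
definition HB :: "nat \<Rightarrow> nat \<Rightarrow> tvert set set" where
  "HB k m = {{Bv (k+2*i), Bv (Suc (k+2*i))} | i. i < m}"

lemma HA_Suc: "HA k (Suc m) = insert {Av k, Av (Suc k)} (HA (Suc (Suc k)) m)"
proof (rule set_eqI, rule iffI)
  fix e assume "e \<in> HA k (Suc m)"
  then obtain i where "i < Suc m" "e = {Av (k+2*i), Av (Suc (k+2*i))}" unfolding HA_def by blast
  thus "e \<in> insert {Av k, Av (Suc k)} (HA (Suc (Suc k)) m)"
    unfolding HA_def by (cases i) auto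
next
  fix e assume "e \<in> insert {Av k, Av (Suc k)} (HA (Suc (Suc k)) m)"
  then consider "e = {Av (k+2*0), Av (Suc (k+2*0))}" | i where "i < m" "e = {Av (Suc (Suc k)+2*i), Av (Suc (Suc (Suc k)+2*i))}"
    unfolding HA_def by auto
  thus "e \<in> HA k (Suc m)"
  proof cases
    case 1 thus ?thesis unfolding HA_def by blast
  next
    case 2
    hence "e = {Av (k+2*Suc i), Av (Suc (k+2*Suc i))}" "Suc i < Suc m" by simp_all
    thus ?thesis unfolding HA_def by blast
  qed
qed

lemma HB_Suc: "HB k (Suc m) = insert {Bv k, Bv (Suc k)} (HB (Suc (Suc k)) m)"
proof (rule set_eqI, rule iffI)
  fix e assume "e \<in> HB k (Suc m)"
  then obtain i where "i < Suc m" "e = {Bv (k+2*i), Bv (Suc (k+2*i))}" unfolding HB_def by blast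
  thus "e \<in> insert {Bv k, Bv (Suc k)} (HB (Suc (Suc k)) m)"
    unfolding HB_def by (cases i) auto
next
  fix e assume "e \<in> insert {Bv k, Bv (Suc k)} (HB (Suc (Suc k)) m)"
  then consider "e = {Bv (k+2*0), Bv (Suc (k+2*0))}" | i where "i < m" "e = {Bv (Suc (Suc k)+2*i), Bv (Suc (Suc (Suc k)+2*i))}"
    unfolding HB_def by auto
  thus "e \<in> HB k (Suc m)"
  proof cases
    case 1 thus ?thesis unfolding HB_def by blast
  next
    case 2
    hence "e = {Bv (k+2*Suc i), Bv (Suc (k+2*Suc i))}" "Suc i < Suc m" by simp_all
    thus ?thesis unfolding HB_def by blast
  qed
qed

lemma dset_rep: "dset k (replicate m H @ u) = HA k m \<union> HB k m \<union> dset (k + 2*m) u"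
proof (induction m arbitrary: k)
  case 0 thus ?case by (simp add: HA_def HB_def)
next
  case (Suc m)
  show ?case using Suc[of "Suc (Suc k)"] by (simp add: HA_Suc HB_Suc) blast
qed



lemma RA_split0: "RA (2*m) = HA 0 m \<union> HA 1 m"
proof (rule set_eqI, rule iffI)
  fix e assume "e \<in> RA (2*m)"
  then obtain i where i: "i < 2*m" "e = {Av i, Av (Suc i)}" unfolding RA_def by blast
  show "e \<in> HA 0 m \<union> HA 1 m"
  proof (cases "even i")
    case True
    hence "i = 0 + 2*(i div 2)" "i div 2 < m" using i by auto
    thus ?thesis using i unfolding HA_def by (metis (mono_tags, lifting) UnI1 mem_Collect_eq)
  next
    case False
    hence "i = 1 + 2*(i div 2)" "i div 2 < m" using i by presburger+
    thus ?thesis using i unfolding HA_def by (metis (mono_tags, lifting) UnI2 mem_Collect_eq)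
  qed
next
  fix e assume "e \<in> HA 0 m \<union> HA 1 m"
  thus "e \<in> RA (2*m)" unfolding RA_def HA_def by fastforce
qed

lemma RA_split1: "RA (Suc (2*m)) = HA 0 (Suc m) \<union> HA 1 m"
proof (rule set_eqI, rule iffI)
  fix e assume "e \<in> RA (Suc (2*m))"
  then obtain i where i: "i < Suc (2*m)" "e = {Av i, Av (Suc i)}" unfolding RA_def by blast
  show "e \<in> HA 0 (Suc m) \<union> HA 1 m"
  proof (cases "even i")
    case True
    hence "i = 0 + 2*(i div 2)" "i div 2 < Suc m" using i by auto
    thus ?thesis using i unfolding HA_def by (metis (mono_tags, lifting) UnI1 mem_Collect_eq)
  next
    case False
    hence "i = 1 + 2*(i div 2)" "i div 2 < m" using i by presburger+
    thus ?thesis using i unfolding HA_def by (metis (mono_tags, lifting) UnI2 mem_Collect_eq)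
  qed
next
  fix e assume "e \<in> HA 0 (Suc m) \<union> HA 1 m"
  thus "e \<in> RA (Suc (2*m))" unfolding RA_def HA_def by fastforce
qed

lemma RB_split0: "RB (2*m) = HB 0 m \<union> HB 1 m"
proof (rule set_eqI, rule iffI)
  fix e assume "e \<in> RB (2*m)"
  then obtain i where i: "i < 2*m" "e = {Bv i, Bv (Suc i)}" unfolding RB_def by blast
  show "e \<in> HB 0 m \<union> HB 1 m"
  proof (cases "even i")
    case True
    hence "i = 0 + 2*(i div 2)" "i div 2 < m" using i by auto
    thus ?thesis using i unfolding HB_def by (metis (mono_tags, lifting) UnI1 mem_Collect_eq)
  next
    case False
    hence "i = 1 + 2*(i div 2)" "i div 2 < m" using i by presburger+
    thus ?thesis using i unfolding HB_def by (metis (mono_tags, lifting) UnI2 mem_Collect_eq)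
  qed
next
  fix e assume "e \<in> HB 0 m \<union> HB 1 m"
  thus "e \<in> RB (2*m)" unfolding RB_def HB_def by fastforce
qed

lemma RB_split1: "RB (Suc (2*m)) = HB 0 (Suc m) \<union> HB 1 m"
proof (rule set_eqI, rule iffI)
  fix e assume "e \<in> RB (Suc (2*m))"
  then obtain i where i: "i < Suc (2*m)" "e = {Bv i, Bv (Suc i)}" unfolding RB_def by blast
  show "e \<in> HB 0 (Suc m) \<union> HB 1 m"
  proof (cases "even i")
    case True
    hence "i = 0 + 2*(i div 2)" "i div 2 < Suc m" using i by auto
    thus ?thesis using i unfolding HB_def by (metis (mono_tags, lifting) UnI1 mem_Collect_eq)
  next
    case False
    hence "i = 1 + 2*(i div 2)" "i div 2 < m" using i by presburger+
    thus ?thesis using i unfolding HB_def by (metis (mono_tags, lifting) UnI2 mem_Collect_eq)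
  qed
next
  fix e assume "e \<in> HB 0 (Suc m) \<union> HB 1 m"
  thus "e \<in> RB (Suc (2*m))" unfolding RB_def HB_def by fastforce
qed

lemma HA_form: "e \<in> HA k m \<Longrightarrow> \<exists>i. e = {Av i, Av (Suc i)}" unfolding HA_def by blast
lemma HB_form: "e \<in> HB k m \<Longrightarrow> \<exists>i. e = {Bv i, Bv (Suc i)}" unfolding HB_def by blast

lemma HA_disj: "HA 0 m \<inter> HA 1 m' = {}"
proof -
  have "{Av (2*i), Av (Suc (2*i))} \<noteq> {Av (1+2*i'), Av (Suc (1+2*i'))}" for i i'
  proof
    assume "{Av (2*i), Av (Suc (2*i))} = {Av (1+2*i'), Av (Suc (1+2*i'))}"
    hence "Av (2*i) = Av (1+2*i') \<or> Av (2*i) = Av (Suc (1+2*i'))" by (auto simp: doubleton_eq_iff)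
    hence "2*i = 1+2*i' \<or> 2*i = Suc (1+2*i')" by simp
    moreover have "Av (Suc (2*i)) \<in> {Av (1+2*i'), Av (Suc (1+2*i'))}"
      using \<open>{Av (2*i), Av (Suc (2*i))} = _\<close> by blast
    ultimately show False by auto presburger
  qed
  thus ?thesis unfolding HA_def by auto
qed

lemma HB_disj: "HB 0 m \<inter> HB 1 m' = {}"
proof -
  have "{Bv (2*i), Bv (Suc (2*i))} \<noteq> {Bv (1+2*i'), Bv (Suc (1+2*i'))}" for i i'
  proof
    assume "{Bv (2*i), Bv (Suc (2*i))} = {Bv (1+2*i'), Bv (Suc (1+2*i'))}"
    hence "Bv (2*i) = Bv (1+2*i') \<or> Bv (2*i) = Bv (Suc (1+2*i'))" by (auto simp: doubleton_eq_iff)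
    hence "2*i = 1+2*i' \<or> 2*i = Suc (1+2*i')" by simp
    moreover have "Bv (Suc (2*i)) \<in> {Bv (1+2*i'), Bv (Suc (1+2*i'))}"
      using \<open>{Bv (2*i), Bv (Suc (2*i))} = _\<close> by blast
    ultimately show False by auto presburger
  qed
  thus ?thesis unfolding HB_def by auto
qed

lemma hi_notin_PE: "hi (Suc j) e \<Longrightarrow> e \<notin> PE j"
  unfolding hi_def PE_def RA_def RB_def by fastforce

lemma setalg1: "D \<inter> (X \<union> {r} \<union> (A0 \<union> A1) \<union> (B0 \<union> B1)) = {} \<Longrightarrow> X \<inter> (A0\<union>A1\<union>B0\<union>B1) = {}
  \<Longrightarrow> r \<notin> A0\<union>A1\<union>B0\<union>B1 \<Longrightarrow> r \<notin> X \<Longrightarrow> A0 \<inter> A1 = {} \<Longrightarrow> B0 \<inter> B1 = {}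
  \<Longrightarrow> (A0\<union>A1) \<inter> (B0\<union>B1) = {} \<Longrightarrow>
  symdiff (X \<union> (A1 \<union> B1 \<union> D)) (X \<union> {r} \<union> (A0\<union>A1) \<union> (B0\<union>B1)) = A0 \<union> B0 \<union> insert r D"
  unfolding symdiff_def by blast

lemma setalg2: "D \<inter> (X \<union> {r} \<union> (A0 \<union> A1) \<union> (B0 \<union> B1)) = {} \<Longrightarrow> X \<inter> (A0\<union>A1\<union>B0\<union>B1) = {}
  \<Longrightarrow> r \<notin> A0\<union>A1\<union>B0\<union>B1 \<Longrightarrow> r \<notin> X \<Longrightarrow> A0 \<inter> A1 = {} \<Longrightarrow> B0 \<inter> B1 = {}
  \<Longrightarrow> (A0\<union>A1) \<inter> (B0\<union>B1) = {} \<Longrightarrow>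
  symdiff (X \<union> (A1 \<union> B1 \<union> insert r D)) (X \<union> {r} \<union> (A0\<union>A1) \<union> (B0\<union>B1)) = A0 \<union> B0 \<union> D"
  unfolding symdiff_def by blast

lemma HAB_disj: "(HA k n \<union> HA k' n') \<inter> (HB l p \<union> HB l' p') = {}"
  using HA_form HB_form by (fastforce simp: doubleton_eq_iff)

lemma flip1: "symdiff (Dst (replicate m H @ u)) (PE (2*m)) = dset 0 (replicate m H @ R # u)"
proof -
  let ?X = "{{Vv, Av 0}, {Bv 0, Ww}}" and ?r = "{Av (2*m), Bv (2*m)}" and ?D = "dset (Suc (2*m)) u"
  have 1: "Dst (replicate m H @ u) = ?X \<union> (HA 1 m \<union> HB 1 m \<union> ?D)"
    unfolding Dst_def dset_rep by simp
  have 2: "PE (2*m) = ?X \<union> {?r} \<union> (HA 0 m \<union> HA 1 m) \<union> (HB 0 m \<union> HB 1 m)"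
    unfolding PE_def RA_split0 RB_split0 by blast
  have 3: "dset 0 (replicate m H @ R # u) = HA 0 m \<union> HB 0 m \<union> insert ?r ?D"
    unfolding dset_rep by simp
  have d1: "?D \<inter> PE (2*m) = {}" using dset_hi hi_notin_PE by blast
  have d2: "e \<notin> ?X" "e \<noteq> ?r" if "e \<in> HA k n \<union> HB k n" for e k n
    using that HA_form HB_form by (fastforce simp: doubleton_eq_iff)+
  have d3: "?r \<notin> ?X" by auto
  show ?thesis unfolding 1 3 2
  proof (rule setalg1)
    show "?D \<inter> (?X \<union> {?r} \<union> (HA 0 m \<union> HA 1 m) \<union> (HB 0 m \<union> HB 1 m)) = {}"
      using d1 unfolding 2 .
    show "?X \<inter> (HA 0 m \<union> HA 1 m \<union> HB 0 m \<union> HB 1 m) = {}"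
      using d2(1)[of _ 0 "m"] d2(1)[of _ 1 "m"] by blast
    show "?r \<notin> HA 0 m \<union> HA 1 m \<union> HB 0 m \<union> HB 1 m"
      using d2(2)[of ?r 0 "m"] d2(2)[of ?r 1 "m"] by blast
    show "?r \<notin> ?X" by (rule d3)
    show "HA 0 m \<inter> HA 1 m = {}" by (rule HA_disj)
    show "HB 0 m \<inter> HB 1 m = {}" by (rule HB_disj)
    show "(HA 0 m \<union> HA 1 m) \<inter> (HB 0 m \<union> HB 1 m) = {}" by (rule HAB_disj)
  qed
qed

lemma flip2: "symdiff (Dst (replicate m H @ R # u)) (PE (Suc (2*m))) = dset 0 (replicate (Suc m) H @ u)"
proof -
  let ?X = "{{Vv, Av 0}, {Bv 0, Ww}}" and ?r = "{Av (Suc (2*m)), Bv (Suc (2*m))}" and ?D = "dset (Suc (Suc (2*m))) u"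
  have 1: "Dst (replicate m H @ R # u) = ?X \<union> (HA 1 m \<union> HB 1 m \<union> insert ?r ?D)"
    unfolding Dst_def dset_rep by simp
  have 2: "PE (Suc (2*m)) = ?X \<union> {?r} \<union> (HA 0 (Suc m) \<union> HA 1 m) \<union> (HB 0 (Suc m) \<union> HB 1 m)"
    unfolding PE_def RA_split1 RB_split1 by blast
  have 3: "dset 0 (replicate (Suc m) H @ u) = HA 0 (Suc m) \<union> HB 0 (Suc m) \<union> ?D"
    unfolding dset_rep by simp
  have d1: "?D \<inter> PE (Suc (2*m)) = {}" using dset_hi hi_notin_PE by blast
  have d2: "e \<notin> ?X" "e \<noteq> ?r" if "e \<in> HA k n \<union> HB k n" for e k n
    using that HA_form HB_form by (fastforce simp: doubleton_eq_iff)+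
  have d3: "?r \<notin> ?X" by auto
  show ?thesis unfolding 1 3 2
  proof (rule setalg2)
    show "?D \<inter> (?X \<union> {?r} \<union> (HA 0 (Suc m) \<union> HA 1 m) \<union> (HB 0 (Suc m) \<union> HB 1 m)) = {}"
      using d1 unfolding 2 .
    show "?X \<inter> (HA 0 (Suc m) \<union> HA 1 m \<union> HB 0 (Suc m) \<union> HB 1 m) = {}"
      using d2(1)[of _ 0 "(Suc m)"] d2(1)[of _ 1 "m"] by blast
    show "?r \<notin> HA 0 (Suc m) \<union> HA 1 m \<union> HB 0 (Suc m) \<union> HB 1 m"
      using d2(2)[of ?r 0 "(Suc m)"] d2(2)[of ?r 1 "m"] by blast
    show "?r \<notin> ?X" by (rule d3)
    show "HA 0 (Suc m) \<inter> HA 1 m = {}" by (rule HA_disj)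
    show "HB 0 (Suc m) \<inter> HB 1 m = {}" by (rule HB_disj)
    show "(HA 0 (Suc m) \<union> HA 1 m) \<inter> (HB 0 (Suc m) \<union> HB 1 m) = {}" by (rule HAB_disj)
  qed
qed



definition step :: "nat \<Rightarrow> tvert set set \<Rightarrow> tvert list \<Rightarrow> tvert set set \<Rightarrow> bool" where
  "step h S P S' \<longleftrightarrow> is_path (tower_edges h) P Vv Ww \<and> alternating S P \<and> S' = symdiff S (path_edges P)"

lemma wlen_app: "wlen (xs @ ys) = wlen xs + wlen ys"
proof (induction xs)
  case (Cons t xs) thus ?case by (cases t) auto
qed simp

lemma wlen_rep: "wlen (replicate m H) = 2*m"
  by (induction m) auto

definition F :: "tile list \<Rightarrow> tile list \<Rightarrow> bool" where
  "F x y \<longleftrightarrow> (\<exists>m u. x = replicate m H @ u \<and> y = replicate m H @ R # u)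
            \<or> (\<exists>m u. x = replicate m H @ R # u \<and> y = replicate (Suc m) H @ u)"

lemma step_pair:
  assumes "j \<le> h" "symdiff (Dst x) (PE j) = dset 0 y"
  shows "\<exists>P. step h (Dst x) P (dset 0 y) \<and> step h (dset 0 y) P (Dst x)"
proof (intro exI conjI)
  have p: "is_path (tower_edges h) (pth j) Vv Ww" using pth_path assms(1) .
  hence d: "distinct (pth j)" unfolding is_path_def by blast
  have sd: "symdiff (Dst x) (path_edges (pth j)) = dset 0 y" using assms(2) pth_edges by simp
  have sd2: "symdiff (dset 0 y) (path_edges (pth j)) = Dst x" using sd symdiff_invol by metis
  show "step h (Dst x) (pth j) (dset 0 y)" unfolding step_def
    using p sd alt_from_matchings[OF Dst_matching _ d] dset_matching by simp
  show "step h (dset 0 y) (pth j) (Dst x)" unfolding step_def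
    using p sd2 alt_from_matchings[OF dset_matching _ d] Dst_matching by simp
qed

lemma F_step:
  assumes "F x y" "wlen x = h"
  shows "\<exists>P. step h (Dst x) P (dset 0 y) \<and> step h (dset 0 y) P (Dst x)"
  using assms(1) unfolding F_def
proof (elim disjE exE conjE)
  fix m u assume x: "x = replicate m H @ u" and y: "y = replicate m H @ R # u"
  have "2*m \<le> h" using assms(2) x by (simp add: wlen_app wlen_rep)
  thus ?thesis using step_pair flip1 x y by blast
next
  fix m u assume x: "x = replicate m H @ R # u" and y: "y = replicate (Suc m) H @ u"
  have "Suc (2*m) \<le> h" using assms(2) x by (simp add: wlen_app wlen_rep)
  thus ?thesis using step_pair flip2 x y by blast
qed

fun wb :: "nat \<Rightarrow> tvert set set \<Rightarrow> tvert list list \<Rightarrow> bool" where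
  "wb h M [] = True"
| "wb h M (P # Ps) = (is_path (tower_edges h) P Vv Ww \<and> alternating M P \<and> wb h (symdiff M (path_edges P)) Ps)"

lemma wb_eq: "well_behaved h M Ps = wb h M Ps"
proof (induction Ps arbitrary: M)
  case Nil thus ?case by (simp add: well_behaved_def)
next
  case (Cons P Ps)
  have "well_behaved h M (P # Ps) = ((is_path (tower_edges h) P Vv Ww \<and> alternating M P) \<and>
      well_behaved h (symdiff M (path_edges P)) Ps)"
    unfolding well_behaved_def by (simp add: All_less_Suc2)
  thus ?case using Cons by simp
qed

definition RT :: "nat \<Rightarrow> tile list \<Rightarrow> tile list \<Rightarrow> bool" where
  "RT h x z \<longleftrightarrow> wlen x = h \<and> wlen z = h \<and> (\<exists>y. F x y \<and> F z y)"

inductive rtn :: "nat \<Rightarrow> nat \<Rightarrow> tile list \<Rightarrow> tile list \<Rightarrow> bool" for h where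
  base: "wlen x = h \<Longrightarrow> rtn h 0 x x"
| st: "RT h x z \<Longrightarrow> rtn h n z x' \<Longrightarrow> rtn h (Suc n) x x'"

lemma rtn_seq: "rtn h n x x' \<Longrightarrow> \<exists>Ps. length Ps = 2*n \<and> wb h (Dst x) Ps \<and> flip_all (Dst x) Ps = Dst x'"
proof (induction rule: rtn.induct)
  case (base x) thus ?case by (intro exI[of _ "[]"]) simp
next
  case (st x z n x')
  then obtain Ps where Ps: "length Ps = 2*n" "wb h (Dst z) Ps" "flip_all (Dst z) Ps = Dst x'" by blast
  from st(1) obtain y where y: "F x y" "F z y" "wlen x = h" "wlen z = h" unfolding RT_def by blast
  obtain P where P: "step h (Dst x) P (dset 0 y)" using F_step y by blast
  obtain Q where Q: "step h (dset 0 y) Q (Dst z)" using F_step y by blast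
  show ?case
    by (rule exI[of _ "P # Q # Ps"]) (use P Q Ps in \<open>auto simp: step_def\<close>)
qed

lemma rtn_wlen: "rtn h n x y \<Longrightarrow> wlen x = h \<and> wlen y = h"
  by (induction rule: rtn.induct) (auto simp: RT_def)

lemma rtn_trans: "rtn h n x y \<Longrightarrow> rtn h m y z \<Longrightarrow> rtn h (n+m) x z"
  by (induction rule: rtn.induct) (auto intro: rtn.st)

lemma RT_sym: "RT h x z \<Longrightarrow> RT h z x" unfolding RT_def by blast

lemma rtn_sym: "rtn h n x y \<Longrightarrow> rtn h n y x"
proof (induction rule: rtn.induct)
  case (base x) thus ?case by (rule rtn.base)
next
  case (st x z n x')
  have "rtn h 1 z x" using RT_sym[OF st(1)] st(1) by (auto simp: RT_def intro!: rtn.st rtn.base)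
  from rtn_trans[OF st(3) this] show ?case by simp
qed

lemma RT_refl: "wlen x = h \<Longrightarrow> RT h x x"
proof -
  assume "wlen x = h"
  moreover have "F x (R # x)" unfolding F_def
    by (rule disjI1, rule exI[of _ 0], rule exI[of _ x]) simp
  ultimately show ?thesis unfolding RT_def by blast
qed

lemma rtn_loop: "wlen y = h \<Longrightarrow> rtn h k y y"
  by (induction k) (auto intro: rtn.base rtn.st RT_refl)

lemma rtn_pad: "rtn h n x y \<Longrightarrow> n \<le> N \<Longrightarrow> rtn h N x y"
proof -
  assume a: "rtn h n x y" "n \<le> N"
  have "rtn h (N - n) y y" using rtn_loop rtn_wlen a(1) by blast
  from rtn_trans[OF a(1) this] show ?thesis using a(2) by simp
qed

definition cntR :: "tile list \<Rightarrow> nat" where "cntR x = length (filter (\<lambda>t. t = R) x)"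

lemma wlen_cnt: "wlen x + cntR x = 2 * length x"
proof (induction x)
  case (Cons t x) thus ?case by (cases t) (auto simp: cntR_def)
qed (simp add: cntR_def)

lemma cntR_le: "cntR x \<le> length x" unfolding cntR_def by simp

lemma first_R: "R \<in> set x \<Longrightarrow> \<exists>a u. x = replicate a H @ R # u \<and> cntR u + 1 = cntR x"
proof (induction x)
  case Nil thus ?case by simp
next
  case (Cons t x)
  show ?case
  proof (cases t)
    case R thus ?thesis by (intro exI[of _ 0] exI[of _ x]) (simp add: cntR_def)
  next
    case H
    with Cons obtain a u where "x = replicate a H @ R # u" "cntR u + 1 = cntR x" by auto
    thus ?thesis using H by (intro exI[of _ "Suc a"] exI[of _ u]) (simp add: cntR_def)
  qed
qed

lemma cntR_pos: "0 < cntR x \<Longrightarrow> R \<in> set x"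
proof -
  assume "0 < cntR x"
  hence "filter (\<lambda>t. t = R) x \<noteq> []" unfolding cntR_def by auto
  thus ?thesis unfolding filter_empty_conv by blast
qed

lemma decomp2: "2 \<le> cntR x \<Longrightarrow> \<exists>a b v. x = replicate a H @ R # replicate b H @ R # v \<and> cntR v + 2 = cntR x"
proof -
  assume c: "2 \<le> cntR x"
  have "R \<in> set x" using cntR_pos c by simp
  then obtain a u where u: "x = replicate a H @ R # u" "cntR u + 1 = cntR x" using first_R by blast
  have "0 < cntR u" using c u(2) by simp
  hence "R \<in> set u" by (rule cntR_pos)
  then obtain b v where v: "u = replicate b H @ R # v" "cntR v + 1 = cntR u" using first_R by blast
  show ?thesis by (intro exI[of _ a] exI[of _ b] exI[of _ v]) (use u v in simp)
qed

lemma no_R: "cntR x = 0 \<Longrightarrow> x = replicate (length x) H"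
proof (induction x)
  case (Cons t x) thus ?case by (cases t) (auto simp: cntR_def)
qed simp

lemma one_R: "cntR x = 1 \<Longrightarrow> \<exists>a b. x = replicate a H @ R # replicate b H"
proof -
  assume "cntR x = 1"
  hence "R \<in> set x" using cntR_pos by simp
  then obtain a u where "x = replicate a H @ R # u" "cntR u + 1 = cntR x" using first_R by blast
  hence "x = replicate a H @ R # u" "cntR u = 0" using \<open>cntR x = 1\<close> by simp_all
  thus ?thesis using no_R by blast
qed

lemma merge: "wlen x = h \<Longrightarrow> x = replicate a H @ R # replicate b H @ R # v \<Longrightarrow>
  RT h x (replicate (Suc (a+b)) H @ v)"
proof -
  assume w: "wlen x = h" and x: "x = replicate a H @ R # replicate b H @ R # v"
  let ?y = "replicate (Suc (a+b)) H @ R # v"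
  have "F x ?y" unfolding F_def
    by (rule disjI2, rule exI[of _ a], rule exI[of _ "replicate b H @ R # v"])
       (simp add: x replicate_add)
  moreover have "F (replicate (Suc (a+b)) H @ v) ?y" unfolding F_def by blast
  moreover have "wlen (replicate (Suc (a+b)) H @ v) = h" using w x by (simp add: wlen_app wlen_rep)
  ultimately show ?thesis using w unfolding RT_def by blast
qed

lemma reduce: "wlen x = h \<Longrightarrow> \<exists>z. rtn h (cntR x div 2) x z \<and> cntR z \<le> 1"
proof (induction "cntR x" arbitrary: x rule: less_induct)
  case less
  show ?case
  proof (cases "cntR x \<le> 1")
    case True thus ?thesis using less.prems by (intro exI[of _ x]) (auto intro: rtn.base)
  next
    case False
    hence "2 \<le> cntR x" by simp
    then obtain a b v where x: "x = replicate a H @ R # replicate b H @ R # v" "cntR v + 2 = cntR x"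
      using decomp2 by blast
    let ?x' = "replicate (Suc (a+b)) H @ v"
    have rt: "RT h x ?x'" using merge less.prems x(1) by blast
    have c: "cntR ?x' = cntR v" by (simp add: cntR_def)
    have w: "wlen ?x' = h" using rt unfolding RT_def by blast
    obtain z where z: "rtn h (cntR ?x' div 2) ?x' z" "cntR z \<le> 1"
      using less.hyps[of ?x'] c x(2) w by auto
    have "cntR x div 2 = Suc (cntR ?x' div 2)" using c x(2) by simp
    thus ?thesis using rtn.st[OF rt z(1)] z(2) by auto
  qed
qed

lemma ar1: "(h::nat) + c = 2*l \<Longrightarrow> h + 0 = 2*l' \<Longrightarrow> c \<le> 1 \<Longrightarrow> c = 0" by presburger
lemma ar2: "(h::nat) + c1 = 2*l1 \<Longrightarrow> c1 \<le> l1 \<Longrightarrow> h + c2 = 2*l2 \<Longrightarrow> c2 \<le> l2 \<Longrightarrow> c1 div 2 + c2 div 2 + h mod 2 \<le> h"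
  by presburger
lemma ar3: "(h::nat) + 1 = 2*l \<Longrightarrow> h + c = 2*l' \<Longrightarrow> c \<le> 1 \<Longrightarrow> c = 1" by presburger

lemma connect:
  assumes w1: "wlen x1 = h" and w2: "wlen x2 = h"
  shows "rtn h h x1 x2"
proof -
  obtain z1 where z1: "rtn h (cntR x1 div 2) x1 z1" "cntR z1 \<le> 1" using reduce w1 by blast
  obtain z2 where z2: "rtn h (cntR x2 div 2) x2 z2" "cntR z2 \<le> 1" using reduce w2 by blast
  have z2': "rtn h (cntR x2 div 2) z2 x2" using rtn_sym z2(1) .
  have wz1: "wlen z1 = h" and wz2: "wlen z2 = h" using rtn_wlen z1(1) z2(1) by blast+
  have e1: "wlen x1 + cntR x1 = 2 * length x1" "cntR x1 \<le> length x1" using wlen_cnt cntR_le by blast+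
  have e2: "wlen x2 + cntR x2 = 2 * length x2" "cntR x2 \<le> length x2" using wlen_cnt cntR_le by blast+
  have e3: "wlen z1 + cntR z1 = 2 * length z1" "wlen z2 + cntR z2 = 2 * length z2" using wlen_cnt by blast+
  show ?thesis
  proof (cases "cntR z1 = 0")
    case True
    have h0: "h + 0 = 2 * length z1" using e3 wz1 True by simp
    hence "cntR z2 = 0" using ar1[of h "cntR z2" "length z2" "length z1"] e3 wz2 z2(2) by simp
    hence "length z2 = length z1" using e3 wz2 h0 by simp
    hence "z1 = z2" using no_R True \<open>cntR z2 = 0\<close> by metis
    hence r: "rtn h (cntR x1 div 2 + cntR x2 div 2) x1 x2" using rtn_trans[OF z1(1) z2'[folded \<open>z1 = z2\<close>]] by simp
    have "h mod 2 = 0" using h0 by simp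
    hence "cntR x1 div 2 + cntR x2 div 2 \<le> h" using ar2[of h "cntR x1" "length x1" "cntR x2" "length x2"] e1 e2 w1 w2 by simp
    thus ?thesis using rtn_pad r by blast
  next
    case False
    hence c1: "cntR z1 = 1" using z1(2) by simp
    have h1: "h + 1 = 2 * length z1" using e3 wz1 c1 by simp
    hence c2: "cntR z2 = 1" using ar3[of h "length z1" "cntR z2" "length z2"] e3 wz2 z2(2) by simp
    obtain a b where a: "z1 = replicate a H @ R # replicate b H" using one_R c1 by blast
    obtain c d where c: "z2 = replicate c H @ R # replicate d H" using one_R c2 by blast
    have "a + b = c + d" using wz1 wz2 a c by (simp add: wlen_app wlen_rep)
    have "F z1 (replicate (Suc (a+b)) H)" unfolding F_def
      by (rule disjI2, rule exI[of _ a], rule exI[of _ "replicate b H"]) (simp add: a replicate_add)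
    moreover have "F z2 (replicate (Suc (a+b)) H)" unfolding F_def
      by (rule disjI2, rule exI[of _ c], rule exI[of _ "replicate d H"])
         (simp add: c replicate_add \<open>a + b = c + d\<close>)
    ultimately have "RT h z1 z2" using wz1 wz2 unfolding RT_def by blast
    hence "rtn h (Suc (cntR x2 div 2)) z1 x2" using z2' by (rule rtn.st)
    hence r: "rtn h (cntR x1 div 2 + Suc (cntR x2 div 2)) x1 x2" using rtn_trans[OF z1(1)] by blast
    have "h mod 2 = 1" using h1 by presburger
    hence "cntR x1 div 2 + Suc (cntR x2 div 2) \<le> h" using ar2[of h "cntR x1" "length x1" "cntR x2" "length x2"] e1 e2 w1 w2 by simp
    thus ?thesis using rtn_pad r by blast
  qed
qed



lemma edge_cases: "e \<in> tower_edges h \<Longrightarrow> e = {Vv, Av 0} \<or> e = {Bv 0, Ww} \<or> (\<exists>i\<le>h. e = {Av i, Bv i})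
   \<or> (\<exists>i. Suc i \<le> h \<and> e = {Av i, Av (Suc i)}) \<or> (\<exists>i. Suc i \<le> h \<and> e = {Bv i, Bv (Suc i)})"
proof -
  assume "e \<in> tower_edges h"
  then consider "e = {Vv, Av 0}" | "e = {Bv 0, Ww}" | "\<exists>i\<le>h. e = {Av i, Bv i}"
    | i where "1 \<le> i" "i \<le> h" "e = {Av i, Av (i - 1)}" | i where "1 \<le> i" "i \<le> h" "e = {Bv i, Bv (i - 1)}"
    unfolding tower_edges_def by blast
  thus ?thesis
  proof cases
    case (4 i)
    hence "Suc (i-1) \<le> h \<and> e = {Av (i-1), Av (Suc (i-1))}" by auto
    thus ?thesis by blast
  next
    case (5 i)
    hence "Suc (i-1) \<le> h \<and> e = {Bv (i-1), Bv (Suc (i-1))}" by auto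
    thus ?thesis by blast
  qed auto
qed

lemma edgeA: "e \<in> tower_edges h \<Longrightarrow> Av o' \<in> e \<Longrightarrow> e = {Av o', Bv o'} \<or> (Suc o' \<le> h \<and> e = {Av o', Av (Suc o')})
   \<or> (0 < o' \<and> e = {Av (o'-1), Av o'}) \<or> (o' = 0 \<and> e = {Vv, Av 0})"
  by (drule edge_cases) auto

lemma edgeB: "e \<in> tower_edges h \<Longrightarrow> Bv o' \<in> e \<Longrightarrow> e = {Av o', Bv o'} \<or> (Suc o' \<le> h \<and> e = {Bv o', Bv (Suc o')})
   \<or> (0 < o' \<and> e = {Bv (o'-1), Bv o'}) \<or> (o' = 0 \<and> e = {Bv 0, Ww})"
  by (drule edge_cases) auto

lemma E_not_hi: "e \<in> tower_edges h \<Longrightarrow> \<not> hi (Suc h) e"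
  by (drule edge_cases) (auto simp: hi_def)

lemma E_low: "e \<in> tower_edges h \<Longrightarrow> \<not> hi 1 e \<Longrightarrow> Vv \<in> e \<or> Ww \<in> e \<or> Av 0 \<in> e \<or> Bv 0 \<in> e"
  apply (drule edge_cases)
  apply (auto simp: hi_def)
  apply (metis Suc_leI)+
  done

lemma hi_level: "hi o' e \<Longrightarrow> \<not> hi (Suc o') e \<Longrightarrow> Av o' \<in> e \<or> Bv o' \<in> e"
  unfolding hi_def by (metis Suc_leI le_neq_implies_less)

lemma hi_mono: "hi (Suc o') e \<Longrightarrow> hi o' e"
  unfolding hi_def by (meson Suc_leD)

lemma verts_A: "i \<le> h \<Longrightarrow> Av i \<in> tower_verts h" unfolding tower_verts_def by auto
lemma verts_B: "i \<le> h \<Longrightarrow> Bv i \<in> tower_verts h" unfolding tower_verts_def by auto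
lemma verts_V: "Vv \<in> tower_verts h" unfolding tower_verts_def by auto
lemma verts_W: "Ww \<in> tower_verts h" unfolding tower_verts_def by auto

locale pmx =
  fixes h :: nat and M :: "tvert set set"
  assumes pm: "perfect_matching (tower_edges h) (tower_verts h) M"
begin

lemma sub: "e \<in> M \<Longrightarrow> e \<in> tower_edges h" using pm unfolding perfect_matching_def by blast

lemma uniq: "z \<in> tower_verts h \<Longrightarrow> e1 \<in> M \<Longrightarrow> e2 \<in> M \<Longrightarrow> z \<in> e1 \<Longrightarrow> z \<in> e2 \<Longrightarrow> e1 = e2"
  using pm unfolding perfect_matching_def by blast

lemma cover: "z \<in> tower_verts h \<Longrightarrow> \<exists>e\<in>M. z \<in> e"
  using pm unfolding perfect_matching_def by blast

lemma uA: "i \<le> h \<Longrightarrow> e1 \<in> M \<Longrightarrow> e2 \<in> M \<Longrightarrow> Av i \<in> e1 \<Longrightarrow> Av i \<in> e2 \<Longrightarrow> e1 = e2"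
  using uniq verts_A by blast
lemma uB: "i \<le> h \<Longrightarrow> e1 \<in> M \<Longrightarrow> e2 \<in> M \<Longrightarrow> Bv i \<in> e1 \<Longrightarrow> Bv i \<in> e2 \<Longrightarrow> e1 = e2"
  using uniq verts_B by blast

lemma claim:
  "h + 1 - o' = k \<Longrightarrow> 1 \<le> o' \<Longrightarrow> o' \<le> h + 1 \<Longrightarrow> {Av (o'-1), Av o'} \<notin> M \<Longrightarrow> {Bv (o'-1), Bv o'} \<notin> M
   \<Longrightarrow> \<exists>x. wlen x = h + 1 - o' \<and> {e\<in>M. hi o' e} = dset o' x"
proof (induction k arbitrary: o' rule: less_induct)
  case (less k)
  show ?case
  proof (cases "o' = h + 1")
    case True
    hence "{e\<in>M. hi o' e} = {}" using E_not_hi sub by auto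
    thus ?thesis using True by (intro exI[of _ "[]"]) simp
  next
    case False
    hence oh: "o' \<le> h" using less.prems by simp
    obtain e where e: "e \<in> M" "Av o' \<in> e" using cover verts_A oh by blast
    have eo: "e \<noteq> {Av (o'-1), Av o'}" using e(1) less.prems(4) by blast
    have "o' \<noteq> 0" using less.prems by simp
    with edgeA[OF sub[OF e(1)] e(2)] eo
    consider "e = {Av o', Bv o'}" | "Suc o' \<le> h" "e = {Av o', Av (Suc o')}" by blast
    thus ?thesis
    proof cases
      case 1
      have n1: "{Av o', Av (Suc o')} \<notin> M"
      proof
        assume a: "{Av o', Av (Suc o')} \<in> M"
        have "e = {Av o', Av (Suc o')}" by (rule uA[OF oh e(1) a e(2)]) simp
        thus False using 1 by (simp add: doubleton_eq_iff)
      qed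
      have n2: "{Bv o', Bv (Suc o')} \<notin> M"
      proof
        assume a: "{Bv o', Bv (Suc o')} \<in> M"
        have "e = {Bv o', Bv (Suc o')}" by (rule uB[OF oh e(1) a]) (simp_all add: 1)
        thus False using 1 by (simp add: doubleton_eq_iff)
      qed
      have lt: "h + 1 - Suc o' < k" using less.prems oh by simp
      obtain x where x: "wlen x = h + 1 - Suc o'" "{e\<in>M. hi (Suc o') e} = dset (Suc o') x"
        using less.IH[OF lt refl] oh n1 n2 by auto
      have "{e\<in>M. hi o' e} = insert {Av o', Bv o'} {e\<in>M. hi (Suc o') e}"
      proof (rule set_eqI, rule iffI)
        fix f assume f: "f \<in> {e\<in>M. hi o' e}"
        show "f \<in> insert {Av o', Bv o'} {e\<in>M. hi (Suc o') e}"
        proof (cases "hi (Suc o') f")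
          case False
          hence "Av o' \<in> f \<or> Bv o' \<in> f" using hi_level f by blast
          moreover have "f \<in> M" using f by blast
          ultimately have "f = e" using uA[OF oh _ e(1) _ e(2)] uB[OF oh _ e(1)] 1 by auto
          thus ?thesis using 1 by simp
        qed (use f in simp)
      next
        fix f assume "f \<in> insert {Av o', Bv o'} {e\<in>M. hi (Suc o') e}"
        thus "f \<in> {e\<in>M. hi o' e}" using e 1 hi_mono by (auto simp: hi_def)
      qed
      thus ?thesis using x oh by (intro exI[of _ "R # x"]) simp
    next
      case 2
      have s: "Suc o' \<le> h" using 2 by simp
      obtain e' where e': "e' \<in> M" "Bv o' \<in> e'" using cover verts_B oh by blast
      have ne: "e' \<noteq> {Av o', Bv o'}"
      proof
        assume a: "e' = {Av o', Bv o'}"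
        have "e' = e" by (rule uA[OF oh e'(1) e(1) _ e(2)]) (simp add: a)
        thus False using 2 a by (simp add: doubleton_eq_iff)
      qed
      have ne2: "e' \<noteq> {Bv (o'-1), Bv o'}" using e'(1) less.prems(5) by blast
      from edgeB[OF sub[OF e'(1)] e'(2)] \<open>o' \<noteq> 0\<close> ne ne2
      have e'2: "e' = {Bv o', Bv (Suc o')}" by blast
      have n1: "{Av (Suc o'), Av (Suc (Suc o'))} \<notin> M"
      proof
        assume a: "{Av (Suc o'), Av (Suc (Suc o'))} \<in> M"
        have "e = {Av (Suc o'), Av (Suc (Suc o'))}" by (rule uA[OF s e(1) a]) (simp_all add: 2)
        thus False using 2 by (simp add: doubleton_eq_iff)
      qed
      have n2: "{Bv (Suc o'), Bv (Suc (Suc o'))} \<notin> M"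
      proof
        assume a: "{Bv (Suc o'), Bv (Suc (Suc o'))} \<in> M"
        have "e' = {Bv (Suc o'), Bv (Suc (Suc o'))}" by (rule uB[OF s e'(1) a]) (simp_all add: e'2)
        thus False using e'2 by (simp add: doubleton_eq_iff)
      qed
      have lt: "h + 1 - Suc (Suc o') < k" using less.prems s by simp
      obtain x where x: "wlen x = h + 1 - Suc (Suc o')" "{e\<in>M. hi (Suc (Suc o')) e} = dset (Suc (Suc o')) x"
        using less.IH[OF lt refl] s n1 n2 by auto
      have "{e\<in>M. hi o' e} = {{Av o', Av (Suc o')}, {Bv o', Bv (Suc o')}} \<union> {e\<in>M. hi (Suc (Suc o')) e}"
      proof (rule set_eqI, rule iffI)
        fix f assume f: "f \<in> {e\<in>M. hi o' e}"
        hence fM: "f \<in> M" by blast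
        show "f \<in> {{Av o', Av (Suc o')}, {Bv o', Bv (Suc o')}} \<union> {e\<in>M. hi (Suc (Suc o')) e}"
        proof (cases "hi (Suc (Suc o')) f")
          case False
          show ?thesis
          proof (cases "hi (Suc o') f")
            case True
            hence "Av (Suc o') \<in> f \<or> Bv (Suc o') \<in> f" using hi_level False by blast
            hence "f = e \<or> f = e'" using uA[OF s fM e(1)] uB[OF s fM e'(1)] 2 e'2 by auto
            thus ?thesis using 2 e'2 by blast
          next
            case False
            hence "Av o' \<in> f \<or> Bv o' \<in> f" using hi_level f by blast
            hence "f = e \<or> f = e'" using uA[OF oh fM e(1)] uB[OF oh fM e'(1)] e(2) e'(2) by auto
            thus ?thesis using 2 e'2 by blast
          qed
        qed (use f in simp)
      next
        fix f assume "f \<in> {{Av o', Av (Suc o')}, {Bv o', Bv (Suc o')}} \<union> {e\<in>M. hi (Suc (Suc o')) e}"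
        thus "f \<in> {e\<in>M. hi o' e}" using e e' 2 e'2 hi_mono by (auto simp: hi_def)
      qed
      thus ?thesis using x s by (intro exI[of _ "H # x"]) simp
    qed
  qed
qed

lemma char:
  assumes sd: "semi_default M"
  shows "\<exists>x. wlen x = h \<and> M = Dst x"
proof -
  have va: "{Vv, Av 0} \<in> M" and bw: "{Bv 0, Ww} \<in> M" using sd unfolding semi_default_def by auto
  have n1: "{Av (1-1), Av 1} \<notin> M"
    using uniq[OF verts_A[of 0 h] va] by (auto simp: doubleton_eq_iff)
  have n2: "{Bv (1-1), Bv 1} \<notin> M"
    using uniq[OF verts_B[of 0 h] bw] by (auto simp: doubleton_eq_iff)
  obtain x where x: "wlen x = h + 1 - 1" "{e\<in>M. hi 1 e} = dset 1 x"
    using claim[OF refl _ _ n1 n2] by auto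
  have "M = {{Vv, Av 0}, {Bv 0, Ww}} \<union> {e\<in>M. hi 1 e}"
  proof (rule set_eqI, rule iffI)
    fix f assume f: "f \<in> M"
    show "f \<in> {{Vv, Av 0}, {Bv 0, Ww}} \<union> {e\<in>M. hi 1 e}"
    proof (cases "hi 1 f")
      case False
      hence "Vv \<in> f \<or> Ww \<in> f \<or> Av 0 \<in> f \<or> Bv 0 \<in> f" using E_low sub f by blast
      hence "f = {Vv, Av 0} \<or> f = {Bv 0, Ww}"
        using uniq[OF verts_V _ va] uniq[OF verts_W _ bw] uniq[OF verts_A[of 0 h] _ va]
          uniq[OF verts_B[of 0 h] _ bw] f by auto
      thus ?thesis by blast
    qed (use f in simp)
  qed (use va bw in auto)
  thus ?thesis using x unfolding Dst_def by auto
qed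

end


theorem mainTheorem8:
  fixes h :: nat and M1 M2 :: "tvert set set"
  assumes "perfect_matching (tower_edges h) (tower_verts h) M1"
    and "perfect_matching (tower_edges h) (tower_verts h) M2"
    and "semi_default M1" and "semi_default M2"
  shows "\<exists>Ps. length Ps = 2 * h \<and> well_behaved h M1 Ps \<and> flip_all M1 Ps = M2"
proof -
  interpret p1: pmx h M1 by unfold_locales (rule assms(1))
  interpret p2: pmx h M2 by unfold_locales (rule assms(2))
  obtain x1 where x1: "wlen x1 = h" "M1 = Dst x1" using p1.char assms(3) by blast
  obtain x2 where x2: "wlen x2 = h" "M2 = Dst x2" using p2.char assms(4) by blast
  have "rtn h h x1 x2" using connect x1(1) x2(1) .
  then obtain Ps where Ps: "length Ps = 2*h" "wb h (Dst x1) Ps" "flip_all (Dst x1) Ps = Dst x2"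
    using rtn_seq by blast
  show ?thesis using Ps x1 x2 wb_eq by metis
qed

end
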